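(* The class of multi-modal antitone algebras is closed under canonical extensions: if $M=\langle A,\{\Box_b\}_{b\in B}\rangle$ is a multi-modal antitone algebra, then $\mathrm{Em}(M)=\langle\mathcal{P}(\mathrm{Ul}(A)),\{[Q_b]\}_{b\in B}\rangle$, with the operator $[Q_b]$ indexed by $\varphi(b)\in\varphi[B]$ (a Boolean subalgebra of $\mathcal{P}(\mathrm{Ul}(A))$), is a multi-modal antitone algebra.
   Context: A multi-modal antitone algebra is $\langle A,\{\Box_b\}_{b\in B}\rangle$ where $A$ is a Boolean algebra, $B$ is a Boolean subalgebra of $A$, and each $\Box_b\colon A\to A$ satisfies $\Box_b(1)=1$, $\Box_b(a\wedge c)=\Box_b(a)\wedge\Box_b(c)$, and $\Box_{b_1\vee b_2}(a)\le\Box_{b_1}(a)\wedge\Box_{b_2}(a)$ for all $a,c\in A$, $b,b_1,b_2\in B$. $\mathrm{Ul}(A)$ is the set of ultrafilters of $A$, $\varphi(a)=\{u\in\mathrm{Ul}(A):a\in u\}$. For $b\in B$ and $u,v\in\mathrm{Ul}(A)$: $Q_b(u,v)$ iff $\Box_b^{-1}[u]=\{a\in A:\Box_b(a)\in u\}\subseteq v$; $Q_b(u)=\{v:Q_b(u,v)\}$; and for $X\subseteq\mathrm{Ul}(A)$, $[Q_b](X)=\{u: Q_b(u)\subseteq X\}$. *)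

theory Defs
  imports Main
begin

definition boolean_algebra_on ::
  "'a set \<Rightarrow> ('a \<Rightarrow> 'a \<Rightarrow> 'a) \<Rightarrow> ('a \<Rightarrow> 'a \<Rightarrow> 'a) \<Rightarrow> ('a \<Rightarrow> 'a) \<Rightarrow> 'a \<Rightarrow> 'a \<Rightarrow> bool"
  where "boolean_algebra_on A jn mt cp tp bt \<longleftrightarrow>
     tp \<in> A \<and> bt \<in> A \<and>
     (\<forall>x\<in>A. \<forall>y\<in>A. jn x y \<in> A \<and> mt x y \<in> A) \<and> (\<forall>x\<in>A. cp x \<in> A) \<and>
     (\<forall>x\<in>A. \<forall>y\<in>A. jn x y = jn y x \<and> mt x y = mt y x) \<and>
     (\<forall>x\<in>A. \<forall>y\<in>A. \<forall>z\<in>A. jn (jn x y) z = jn x (jn y z) \<and> mt (mt x y) z = mt x (mt y z)) \<and>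
     (\<forall>x\<in>A. \<forall>y\<in>A. jn x (mt x y) = x \<and> mt x (jn x y) = x) \<and>
     (\<forall>x\<in>A. \<forall>y\<in>A. \<forall>z\<in>A. mt x (jn y z) = jn (mt x y) (mt x z)) \<and>
     (\<forall>x\<in>A. jn x (cp x) = tp \<and> mt x (cp x) = bt)"

definition subalgebra_on ::
  "'a set \<Rightarrow> ('a \<Rightarrow> 'a \<Rightarrow> 'a) \<Rightarrow> ('a \<Rightarrow> 'a \<Rightarrow> 'a) \<Rightarrow> ('a \<Rightarrow> 'a) \<Rightarrow> 'a \<Rightarrow> 'a \<Rightarrow> 'a set \<Rightarrow> bool"
  where "subalgebra_on A jn mt cp tp bt B \<longleftrightarrow>
     B \<subseteq> A \<and> tp \<in> B \<and> bt \<in> B \<and>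
     (\<forall>x\<in>B. \<forall>y\<in>B. jn x y \<in> B \<and> mt x y \<in> B) \<and> (\<forall>x\<in>B. cp x \<in> B)"

text \<open>Multi-modal antitone algebra \<open>\<langle>A, {Box b}_{b\<in>B}\<rangle>\<close>; the lattice order is
\<open>x \<le> y \<longleftrightarrow> x \<sqinter> y = x\<close>.\<close>

definition mm_antitone_algebra ::
  "'a set \<Rightarrow> ('a \<Rightarrow> 'a \<Rightarrow> 'a) \<Rightarrow> ('a \<Rightarrow> 'a \<Rightarrow> 'a) \<Rightarrow> ('a \<Rightarrow> 'a) \<Rightarrow> 'a \<Rightarrow> 'a
     \<Rightarrow> 'a set \<Rightarrow> ('a \<Rightarrow> 'a \<Rightarrow> 'a) \<Rightarrow> bool"
  where "mm_antitone_algebra A jn mt cp tp bt B Box \<longleftrightarrow>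
     boolean_algebra_on A jn mt cp tp bt \<and>
     subalgebra_on A jn mt cp tp bt B \<and>
     (\<forall>b\<in>B. \<forall>a\<in>A. Box b a \<in> A) \<and>
     (\<forall>b\<in>B. Box b tp = tp) \<and>
     (\<forall>b\<in>B. \<forall>a\<in>A. \<forall>c\<in>A. Box b (mt a c) = mt (Box b a) (Box b c)) \<and>
     (\<forall>b1\<in>B. \<forall>b2\<in>B. \<forall>a\<in>A.
        mt (Box (jn b1 b2) a) (mt (Box b1 a) (Box b2 a)) = Box (jn b1 b2) a)"

definition is_filter :: "'a::boolean_algebra set \<Rightarrow> bool"
  where "is_filter F \<longleftrightarrow> top \<in> F \<and>
     (\<forall>a c. a \<in> F \<and> c \<in> F \<longrightarrow> inf a c \<in> F) \<and>
     (\<forall>a c. a \<in> F \<and> a \<le> c \<longrightarrow> c \<in> F)"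

definition is_proper_filter :: "'a::boolean_algebra set \<Rightarrow> bool"
  where "is_proper_filter F \<longleftrightarrow> is_filter F \<and> bot \<notin> F"

definition Ul :: "'a::boolean_algebra set set"
  where "Ul = {u. is_proper_filter u \<and> (\<forall>F. is_proper_filter F \<and> u \<subseteq> F \<longrightarrow> F = u)}"

definition phi :: "'a::boolean_algebra \<Rightarrow> 'a set set"
  where "phi a = {u \<in> Ul. a \<in> u}"

definition Qrel :: "('a::boolean_algebra \<Rightarrow> 'a \<Rightarrow> 'a) \<Rightarrow> 'a \<Rightarrow> 'a set \<Rightarrow> 'a set \<Rightarrow> bool"
  where "Qrel Box b u v \<longleftrightarrow> {a. Box b a \<in> u} \<subseteq> v"

definition Qimg :: "('a::boolean_algebra \<Rightarrow> 'a \<Rightarrow> 'a) \<Rightarrow> 'a \<Rightarrow> 'a set \<Rightarrow> 'a set set"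
  where "Qimg Box b u = {v \<in> Ul. Qrel Box b u v}"

definition boxQ :: "('a::boolean_algebra \<Rightarrow> 'a \<Rightarrow> 'a) \<Rightarrow> 'a \<Rightarrow> 'a set set \<Rightarrow> 'a set set"
  where "boxQ Box b X = {u \<in> Ul. Qimg Box b u \<subseteq> X}"

text \<open>The operators of \<open>Em(M)\<close>, indexed by the elements \<open>\<phi>(b)\<close> of \<open>\<phi>[B]\<close>:
the operator indexed by \<open>\<phi>(b)\<close> is \<open>[Q_b]\<close>.\<close>

definition EmBox :: "'a::boolean_algebra set \<Rightarrow> ('a \<Rightarrow> 'a \<Rightarrow> 'a) \<Rightarrow> 'a set set \<Rightarrow> 'a set set \<Rightarrow> 'a set set"
  where "EmBox B Box Y X = boxQ Box (THE b. b \<in> B \<and> phi b = Y) X"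

end

theory Submission
  imports Defs
begin

lemma ul_pf: "u \<in> Ul \<Longrightarrow> is_proper_filter u"
  by (simp add: Ul_def)

lemma ul_F: "(u::'a::boolean_algebra set) \<in> Ul \<Longrightarrow> top \<in> u \<and>
     (\<forall>a c. a \<in> u \<and> c \<in> u \<longrightarrow> inf a c \<in> u) \<and>
     (\<forall>a c. a \<in> u \<and> a \<le> c \<longrightarrow> c \<in> u) \<and> bot \<notin> u"
  using ul_pf unfolding is_proper_filter_def is_filter_def by blast

lemma ul_up: "(u::'a::boolean_algebra set) \<in> Ul \<Longrightarrow> a \<in> u \<Longrightarrow> a \<le> c \<Longrightarrow> c \<in> u"
  using ul_F by blast

lemma ul_top: "(u::'a::boolean_algebra set) \<in> Ul \<Longrightarrow> top \<in> u"
  using ul_F by blast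

lemma ul_bot: "(u::'a::boolean_algebra set) \<in> Ul \<Longrightarrow> bot \<notin> u"
  using ul_F by blast

lemma ul_inf: "(u::'a::boolean_algebra set) \<in> Ul \<Longrightarrow> (inf a c \<in> u) = (a \<in> u \<and> c \<in> u)"
proof -
  assume u: "u \<in> Ul"
  show ?thesis
  proof
    assume "inf a c \<in> u"
    then show "a \<in> u \<and> c \<in> u" using ul_up[OF u, of "inf a c"] by simp
  next
    assume "a \<in> u \<and> c \<in> u"
    then show "inf a c \<in> u" using ul_F[OF u] by blast
  qed
qed

lemma ul_compl1: "(u::'a::boolean_algebra set) \<in> Ul \<Longrightarrow> a \<notin> u \<Longrightarrow> - a \<in> u"
proof -
  assume u: "u \<in> Ul" and a: "a \<notin> u"
  define F where "F = {c. \<exists>x\<in>u. inf x a \<le> c}"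
  have filt: "is_filter F"
    unfolding is_filter_def F_def
  proof (intro conjI allI impI)
    show "top \<in> {c. \<exists>x\<in>u. inf x a \<le> c}" using ul_top[OF u] by auto
  next
    fix c d assume "c \<in> {c. \<exists>x\<in>u. inf x a \<le> c} \<and> d \<in> {c. \<exists>x\<in>u. inf x a \<le> c}"
    then obtain x y where "x \<in> u" "y \<in> u" "inf x a \<le> c" "inf y a \<le> d" by auto
    then show "inf c d \<in> {c. \<exists>x\<in>u. inf x a \<le> c}"
    proof -
      have xy: "inf x y \<in> u" using ul_inf[OF u, of x y] \<open>x \<in> u\<close> \<open>y \<in> u\<close> by simp
      have "inf (inf x y) a \<le> inf x a" by (simp add: inf.coboundedI1 inf_mono)
      moreover have "inf (inf x y) a \<le> inf y a" by (simp add: inf.coboundedI1 inf_mono)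
      ultimately have "inf (inf x y) a \<le> inf c d" using \<open>inf x a \<le> c\<close> \<open>inf y a \<le> d\<close>
        by (meson le_inf_iff order_trans)
      then show ?thesis using xy by blast
    qed
  next
    fix c d assume "c \<in> {c. \<exists>x\<in>u. inf x a \<le> c} \<and> c \<le> d"
    then show "d \<in> {c. \<exists>x\<in>u. inf x a \<le> c}" by (auto intro: order_trans)
  qed
  have sub: "u \<subseteq> F" unfolding F_def using inf_le1 by blast
  have aF: "a \<in> F" unfolding F_def using ul_top[OF u] by auto
  show "- a \<in> u"
  proof (cases "bot \<in> F")
    case True
    then obtain x where x: "x \<in> u" "inf x a \<le> bot" unfolding F_def by auto
    then have "x \<le> - a" using inf_shunt[of x a] bot_unique by auto
    then show ?thesis using ul_up[OF u x(1)] by auto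
  next
    case False
    then have "is_proper_filter F" using filt by (simp add: is_proper_filter_def)
    then have "F = u" using u sub by (auto simp: Ul_def)
    then show ?thesis using aF a by simp
  qed
qed

lemma ul_compl: "(u::'a::boolean_algebra set) \<in> Ul \<Longrightarrow> (- a \<in> u) = (a \<notin> u)"
  using ul_compl1[of u a] ul_inf[of u a "-a"] ul_bot[of u] by auto

lemma ul_sup: "(u::'a::boolean_algebra set) \<in> Ul \<Longrightarrow> (sup a c \<in> u) = (a \<in> u \<or> c \<in> u)"
proof -
  assume u: "u \<in> Ul"
  have "sup a c = - inf (-a) (-c)" by simp
  then show ?thesis using ul_compl[OF u] ul_inf[OF u] by metis
qed

lemma ul_exists:
  assumes d: "(d::'a::boolean_algebra) \<noteq> bot"
  shows "\<exists>u\<in>Ul. d \<in> u"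
proof -
  define A where "A = {F. is_proper_filter F \<and> d \<in> F}"
  have "\<forall>C\<in>chains A. \<exists>U\<in>A. \<forall>X\<in>C. X \<subseteq> U"
  proof
    fix C assume C: "C \<in> chains A"
    show "\<exists>U\<in>A. \<forall>X\<in>C. X \<subseteq> U"
    proof (cases "C = {}")
      case True
      have "{x. d \<le> x} \<in> A"
        unfolding A_def is_proper_filter_def is_filter_def using d
        by (auto intro: order_trans simp: bot_unique)
      then show ?thesis using True by auto
    next
      case False
      have CA: "C \<subseteq> A" and ch: "\<forall>X\<in>C. \<forall>Y\<in>C. X \<subseteq> Y \<or> Y \<subseteq> X"
        using C by (auto simp: chains_def chain_subset_def)
      have "\<Union>C \<in> A"
        unfolding A_def is_proper_filter_def is_filter_def
      proof (intro CollectI conjI allI impI)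
        show "top \<in> \<Union>C" using False CA by (auto simp: A_def is_proper_filter_def is_filter_def)
        show "d \<in> \<Union>C" using False CA by (auto simp: A_def)
        show "bot \<notin> \<Union>C" using CA by (auto simp: A_def is_proper_filter_def)
      next
        fix a c assume "a \<in> \<Union>C \<and> a \<le> c"
        then show "c \<in> \<Union>C" using CA by (auto simp: A_def is_proper_filter_def is_filter_def)
      next
        fix a c assume ac: "a \<in> \<Union>C \<and> c \<in> \<Union>C"
        then obtain X Y where XY: "X \<in> C" "Y \<in> C" "a \<in> X" "c \<in> Y" by auto
        show "inf a c \<in> \<Union>C"
        proof (cases "X \<subseteq> Y")
          case True
          have "Y \<in> A" using CA XY by auto
          then have "inf a c \<in> Y" using XY True by (auto simp: A_def is_proper_filter_def is_filter_def)
          then show ?thesis using XY by blast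
        next
          case False
          then have YX: "Y \<subseteq> X" using ch XY by blast
          have "X \<in> A" using CA XY by auto
          then have "inf a c \<in> X" using XY YX by (auto simp: A_def is_proper_filter_def is_filter_def)
          then show ?thesis using XY by blast
        qed
      qed
      then show ?thesis by auto
    qed
  qed
  then obtain M where M: "M \<in> A" "\<forall>X\<in>A. M \<subseteq> X \<longrightarrow> X = M" using Zorn_Lemma2 by blast
  have "M \<in> Ul"
    unfolding Ul_def using M by (auto simp: A_def)
  then show ?thesis using M by (auto simp: A_def)
qed

lemma phi_inj: "phi (a::'a::boolean_algebra) = phi c \<Longrightarrow> a = c"
proof (rule ccontr)
  assume eq: "phi a = phi c" and ne: "a \<noteq> c"
  have "inf a (-c) \<noteq> bot \<or> inf c (-a) \<noteq> bot"
  proof (rule ccontr)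
    assume "\<not> (inf a (-c) \<noteq> bot \<or> inf c (-a) \<noteq> bot)"
    then have "a \<le> c" "c \<le> a"
      using inf_shunt[of a "-c"] inf_shunt[of c "-a"] by simp_all
    then show False using ne by simp
  qed
  then show False
  proof
    assume "inf a (-c) \<noteq> bot"
    then obtain u where u: "u \<in> Ul" "inf a (-c) \<in> u" using ul_exists by blast
    then have "a \<in> u" "c \<notin> u" using ul_inf[OF u(1)] ul_compl[OF u(1)] by simp_all
    then have "u \<in> phi a" "u \<notin> phi c" using u(1) unfolding phi_def by simp_all
    then show False using eq by simp
  next
    assume "inf c (-a) \<noteq> bot"
    then obtain u where u: "u \<in> Ul" "inf c (-a) \<in> u" using ul_exists by blast
    then have "c \<in> u" "a \<notin> u" using ul_inf[OF u(1)] ul_compl[OF u(1)] by simp_all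
    then have "u \<in> phi c" "u \<notin> phi a" using u(1) unfolding phi_def by simp_all
    then show False using eq by simp
  qed
qed

lemma phi_sup: "phi (sup a c) = phi a \<union> phi (c::'a::boolean_algebra)"
  unfolding phi_def by (auto simp: ul_sup)

lemma phi_inf: "phi (inf a c) = phi a \<inter> phi (c::'a::boolean_algebra)"
  unfolding phi_def by (auto simp: ul_inf)

lemma phi_compl: "phi (- a) = Ul - phi (a::'a::boolean_algebra)"
  unfolding phi_def by (auto simp: ul_compl)

lemma phi_top: "phi (top::'a::boolean_algebra) = Ul"
  unfolding phi_def by (auto simp: ul_top)

lemma phi_bot: "phi (bot::'a::boolean_algebra) = {}"
  unfolding phi_def by (auto simp: ul_bot)

lemma EmBox_phi: "b \<in> B \<Longrightarrow> EmBox B Box (phi b) X = boxQ Box b X"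
  unfolding EmBox_def
  by (rule arg_cong[where f="\<lambda>b. boxQ Box b X"], rule the_equality) (auto dest: phi_inj)

theorem theorem3p3:
  fixes B :: "'a::boolean_algebra set" and Box :: "'a \<Rightarrow> 'a \<Rightarrow> 'a"
  assumes "mm_antitone_algebra UNIV sup inf uminus top bot B Box"
  shows "mm_antitone_algebra (Pow Ul) (\<union>) (\<inter>) (\<lambda>X. Ul - X) Ul {} (phi ` B) (EmBox B Box)"
proof -
  have sub: "\<forall>x\<in>B. \<forall>y\<in>B. sup x y \<in> B \<and> inf x y \<in> B" "\<forall>x\<in>B. - x \<in> B" "top \<in> B" "bot \<in> B"
    using assms by (auto simp: mm_antitone_algebra_def subalgebra_on_def)
  have anti: "\<forall>b1\<in>B. \<forall>b2\<in>B. \<forall>a. inf (Box (sup b1 b2) a) (inf (Box b1 a) (Box b2 a)) = Box (sup b1 b2) a"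
    using assms by (simp add: mm_antitone_algebra_def)
  have ba: "boolean_algebra_on (Pow Ul) (\<union>) (\<inter>) (\<lambda>X. Ul - X) (Ul::'a set set) {}"
    unfolding boolean_algebra_on_def by auto
  have sa: "subalgebra_on (Pow Ul) (\<union>) (\<inter>) (\<lambda>X. Ul - X) (Ul::'a set set) {} (phi ` B)"
    unfolding subalgebra_on_def
  proof (intro conjI ballI)
    show "phi ` B \<subseteq> Pow Ul" by (auto simp: phi_def)
    show "Ul \<in> phi ` B" using sub phi_top by (metis image_eqI)
    show "{} \<in> phi ` B" using sub phi_bot by (metis image_eqI)
  next
    fix x y assume "x \<in> phi ` B" "y \<in> phi ` B"
    then obtain c1 c2 where c: "c1 \<in> B" "c2 \<in> B" "x = phi c1" "y = phi c2" by auto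
    have "x \<union> y = phi (sup c1 c2)" using c by (simp add: phi_sup)
    moreover have "sup c1 c2 \<in> B" using sub c by blast
    ultimately show "x \<union> y \<in> phi ` B" by blast
    have "x \<inter> y = phi (inf c1 c2)" using c by (simp add: phi_inf)
    moreover have "inf c1 c2 \<in> B" using sub c by blast
    ultimately show "x \<inter> y \<in> phi ` B" by blast
  next
    fix x assume "x \<in> phi ` B"
    then obtain c1 where c: "c1 \<in> B" "x = phi c1" by auto
    have "Ul - x = phi (- c1)" using c by (simp add: phi_compl)
    moreover have "- c1 \<in> B" using sub c by blast
    ultimately show "Ul - x \<in> phi ` B" by blast
  qed
  have key: "boxQ Box (sup b1 b2) X \<subseteq> boxQ Box b1 X" if "b1 \<in> B" "b2 \<in> B" for b1 b2 X
  proof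
    fix u assume u: "u \<in> boxQ Box (sup b1 b2) X"
    have "Qimg Box b1 u \<subseteq> Qimg Box (sup b1 b2) u"
    proof
      fix v assume "v \<in> Qimg Box b1 u"
      then have v: "v \<in> Ul" "{a. Box b1 a \<in> u} \<subseteq> v" by (auto simp: Qimg_def Qrel_def)
      have "{a. Box (sup b1 b2) a \<in> u} \<subseteq> {a. Box b1 a \<in> u}"
      proof
        fix a assume "a \<in> {a. Box (sup b1 b2) a \<in> u}"
        moreover have "Box (sup b1 b2) a \<le> Box b1 a" using anti that
          by (metis inf.cobounded1 inf.orderE le_infE)
        ultimately show "a \<in> {a. Box b1 a \<in> u}" using u ul_up unfolding boxQ_def by blast
      qed
      then show "v \<in> Qimg Box (sup b1 b2) u" using v by (auto simp: Qimg_def Qrel_def)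
    qed
    then show "u \<in> boxQ Box b1 X" using u by (auto simp: boxQ_def)
  qed
  show ?thesis
    unfolding mm_antitone_algebra_def
  proof (intro conjI ba sa ballI)
    fix b a assume "b \<in> phi ` B"
    then show "EmBox B Box b a \<in> Pow Ul" by (auto simp: EmBox_def boxQ_def)
  next
    fix b assume "b \<in> phi ` B"
    then show "EmBox B Box b Ul = Ul" by (auto simp: EmBox_def boxQ_def Qimg_def)
  next
    fix b a c assume "b \<in> phi ` B"
    then show "EmBox B Box b (a \<inter> c) = EmBox B Box b a \<inter> EmBox B Box b c"
      by (auto simp: EmBox_def boxQ_def)
  next
    fix b1 b2 a assume b: "b1 \<in> phi ` B" "b2 \<in> phi ` B"
    then obtain c1 c2 where c: "c1 \<in> B" "c2 \<in> B" "b1 = phi c1" "b2 = phi c2" by auto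
    have s12: "b1 \<union> b2 = phi (sup c1 c2)" using c by (simp add: phi_sup)
    have sB: "sup c1 c2 \<in> B" using sub c by blast
    have e: "EmBox B Box (b1 \<union> b2) a = boxQ Box (sup c1 c2) a"
      unfolding s12 by (rule EmBox_phi[OF sB])
    have e1: "EmBox B Box b1 a = boxQ Box c1 a" unfolding c(3) by (rule EmBox_phi[OF c(1)])
    have e2: "EmBox B Box b2 a = boxQ Box c2 a" unfolding c(4) by (rule EmBox_phi[OF c(2)])
    have k1: "boxQ Box (sup c1 c2) a \<subseteq> boxQ Box c1 a" using key c by blast
    have "boxQ Box (sup c2 c1) a \<subseteq> boxQ Box c2 a" using key c by blast
    then have k2: "boxQ Box (sup c1 c2) a \<subseteq> boxQ Box c2 a" by (simp only: sup_commute)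
    show "EmBox B Box (b1 \<union> b2) a \<inter> (EmBox B Box b1 a \<inter> EmBox B Box b2 a) = EmBox B Box (b1 \<union> b2) a"
      unfolding e e1 e2 using k1 k2 by blast
  qed
qed

end
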